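(* Let $V$ be a set of $n$ vertices and let $\mathcal{T}$ be a set (so no repeated members) of triangles on $V$ having no rainbow triangle. Then $|\mathcal{T}| \le \frac{n^2}{8}$.
   Context: A triangle on $V$ is a $3$-element subset $\{x,y,z\}\subseteq V$, identified with its edge set $\{\{x,y\},\{y,z\},\{x,z\}\}$. For a family $\mathcal{T}$ of triangles, a rainbow triangle is a triangle $\{x,y,z\}$ on $V$ together with three distinct members $t_1,t_2,t_3$ of $\mathcal{T}$ (distinct as members of the family) such that $\{x,y\}$ is an edge of $t_1$, $\{y,z\}$ is an edge of $t_2$ and $\{x,z\}$ is an edge of $t_3$. In other words, the three edges of $\{x,y,z\}$ can be taken, each from a different member of $\mathcal{T}$. *)

theory Defs
  imports Complex_Main
begin

definition triangle_on :: "'a set \<Rightarrow> 'a set \<Rightarrow> bool" where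
  "triangle_on V t \<longleftrightarrow> t \<subseteq> V \<and> card t = 3"

definition has_rainbow_triangle :: "'a set \<Rightarrow> 'a set set \<Rightarrow> bool" where
  "has_rainbow_triangle V T \<longleftrightarrow>
     (\<exists>x y z t1 t2 t3. triangle_on V {x, y, z} \<and>
        t1 \<in> T \<and> t2 \<in> T \<and> t3 \<in> T \<and> t1 \<noteq> t2 \<and> t1 \<noteq> t3 \<and> t2 \<noteq> t3 \<and>
        {x, y} \<subseteq> t1 \<and> {y, z} \<subseteq> t2 \<and> {x, z} \<subseteq> t3)"

end

theory Submission
  imports Defs
begin

lemma mantel:
  assumes "finite V" "E \<subseteq> {e. e \<subseteq> V \<and> card e = 2}"
    "\<And>x y z. {x,y}\<in>E \<Longrightarrow> {y,z}\<in>E \<Longrightarrow> {x,z}\<in>E \<Longrightarrow> x\<noteq>y \<Longrightarrow> y\<noteq>z \<Longrightarrow> x\<noteq>z \<Longrightarrow> False"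
  shows "4 * card E \<le> card V ^ 2"
  using assms
proof (induction "card V" arbitrary: V E rule: less_induct)
  case less
  show ?case
  proof (cases "E = {}")
    case True then show ?thesis by simp
  next
    case False
    then obtain e where "e \<in> E" by blast
    then obtain x y where exy: "{x,y} \<in> E" "x\<noteq>y" "x\<in>V" "y\<in>V"
      using less.prems(2) by (auto simp: card_2_iff)
    define V' where "V' = V - {x,y}"
    define E' where "E' = {e\<in>E. e \<subseteq> V'}"
    have "card {x,y} \<le> card V" using exy less.prems(1) by (intro card_mono) auto
    then have "card V \<ge> 2" using exy by simp
    then have cV: "card V = card V' + 2"
      using exy less.prems(1) unfolding V'_def
      by (simp add: card_Diff_subset)
    have IH: "4 * card E' \<le> card V' ^ 2"
    proof (rule less.hyps)
      show "card V' < card V" using cV by simp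
      show "finite V'" using less.prems(1) V'_def by simp
      show "E' \<subseteq> {e. e \<subseteq> V' \<and> card e = 2}" using less.prems(2) E'_def by auto
      show "\<And>x y z. {x,y}\<in>E' \<Longrightarrow> {y,z}\<in>E' \<Longrightarrow> {x,z}\<in>E' \<Longrightarrow> x\<noteq>y \<Longrightarrow> y\<noteq>z \<Longrightarrow> x\<noteq>z \<Longrightarrow> False"
        using less.prems(3) E'_def by blast
    qed
    define S where "S = E - E' - {{x,y}}"
    have Sform: "\<exists>w\<in>V'. e = {x,w} \<or> e = {y,w}" if "e \<in> S" for e
    proof -
      have "e \<in> E" "\<not> e \<subseteq> V'" "e \<noteq> {x,y}" using that S_def E'_def by auto
      have eV: "e \<subseteq> V" "card e = 2" using \<open>e \<in> E\<close> less.prems(2) by blast+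
      then obtain a b where ab0: "e = {a,b}" "a \<noteq> b" by (meson card_2_iff)
      then have ab: "e = {a,b}" "a \<noteq> b" "a \<in> V" "b \<in> V" using eV by auto
      show ?thesis using ab \<open>\<not> e \<subseteq> V'\<close> \<open>e \<noteq> {x,y}\<close> unfolding V'_def
        by (cases "a = x"; cases "a = y"; cases "b = x"; cases "b = y") (auto simp: insert_commute)
    qed
    have inj: "inj_on (\<lambda>e. e - {x,y}) S"
    proof
      fix e1 e2 assume e1: "e1 \<in> S" and e2: "e2 \<in> S" and eq: "e1 - {x,y} = e2 - {x,y}"
      obtain w1 where w1: "w1 \<in> V'" "e1 = {x,w1} \<or> e1 = {y,w1}" using Sform e1 by blast
      obtain w2 where w2: "w2 \<in> V'" "e2 = {x,w2} \<or> e2 = {y,w2}" using Sform e2 by blast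
      have "e1 - {x,y} = {w1}" "e2 - {x,y} = {w2}" using w1 w2 V'_def by auto
      then have "w1 = w2" using eq by simp
      have "e1 \<in> E" "e2 \<in> E" using e1 e2 S_def by auto
      show "e1 = e2"
      proof (rule ccontr)
        assume ne: "e1 \<noteq> e2"
        then have "{x,w1} \<in> E \<and> {y,w1} \<in> E" using w1 w2 \<open>w1 = w2\<close> \<open>e1 \<in> E\<close> \<open>e2 \<in> E\<close> by auto
        then show False using less.prems(3)[of x y w1] exy w1 V'_def by auto
      qed
    qed
    have img: "(\<lambda>e. e - {x,y}) ` S \<subseteq> (\<lambda>w. {w}) ` V'"
    proof
      fix u assume "u \<in> (\<lambda>e. e - {x,y}) ` S"
      then obtain e where "e \<in> S" "u = e - {x,y}" by blast
      then obtain w where "w \<in> V'" "e = {x,w} \<or> e = {y,w}" using Sform by blast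
      then have "u = {w}" using \<open>u = e - {x,y}\<close> V'_def by auto
      then show "u \<in> (\<lambda>w. {w}) ` V'" using \<open>w \<in> V'\<close> by blast
    qed
    have "card S \<le> card ((\<lambda>w. {w}) ` V')"
      by (rule card_inj_on_le[OF inj img]) (use less.prems(1) V'_def in simp)
    also have "\<dots> = card V'" by (simp add: card_image)
    finally have cS: "card S \<le> card V'" .
    have "E = E' \<union> (S \<union> {{x,y}})" using S_def E'_def exy by auto
    then have "card E \<le> card E' + card (S \<union> {{x,y}})"
      using card_Un_le[of E' "S \<union> {{x,y}}"] by simp
    also have "card (S \<union> {{x,y}}) \<le> card S + 1"
      using card_Un_le[of S "{{x,y}}"] by simp
    finally have "card E \<le> card E' + card V' + 1" using cS by simp
    then have "4 * card E \<le> card V' ^ 2 + 4 * card V' + 4" using IH by simp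
    also have "\<dots> = card V ^ 2" using cV by (simp add: power2_eq_square algebra_simps)
    finally show ?thesis .
  qed
qed

definition priv :: "'a set set \<Rightarrow> 'a set \<Rightarrow> 'a set \<Rightarrow> bool" where
  "priv T t e \<longleftrightarrow> e \<subseteq> t \<and> card e = 2 \<and> (\<forall>t'\<in>T. e \<subseteq> t' \<longrightarrow> t' = t)"

lemma keyK:
  assumes tri: "\<forall>t\<in>T. triangle_on V t" and nr: "\<not> has_rainbow_triangle V T"
    and tT: "t \<in> T" and t: "t = {u,v,w}" and d: "u \<noteq> v" "v \<noteq> w" "u \<noteq> w"
    and p1: "\<not> priv T t {u,v}" and p2: "\<not> priv T t {v,w}"
  shows False
proof -
  obtain t1 where t1: "t1 \<in> T" "{u,v} \<subseteq> t1" "t1 \<noteq> t" using p1 d t unfolding priv_def by auto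
  obtain t2 where t2: "t2 \<in> T" "{v,w} \<subseteq> t2" "t2 \<noteq> t" using p2 d t unfolding priv_def by auto
  have ct: "card t = 3" "t \<subseteq> V" using tri tT unfolding triangle_on_def by auto
  have "t1 \<noteq> t2"
  proof
    assume "t1 = t2"
    then have "t \<subseteq> t1" using t1 t2 t by auto
    moreover have "card t1 = 3" "finite t1" using tri t1(1) unfolding triangle_on_def by (auto intro: card_ge_0_finite)
    ultimately have "t = t1" using ct by (metis card_subset_eq)
    then show False using t1 by simp
  qed
  then have "has_rainbow_triangle V T"
    unfolding has_rainbow_triangle_def
    apply (rule_tac x=u in exI, rule_tac x=v in exI, rule_tac x=w in exI)
    apply (rule_tac x=t1 in exI, rule_tac x=t2 in exI, rule_tac x=t in exI)
    using t1 t2 tT t tri by auto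
  then show False using nr by simp
qed

lemma two_priv:
  assumes tri: "\<forall>t\<in>T. triangle_on V t" and nr: "\<not> has_rainbow_triangle V T"
    and tT: "t \<in> T"
  shows "\<exists>p. fst p \<noteq> snd p \<and> priv T t (fst p) \<and> priv T t (snd p)"
proof -
  have "card t = 3" using tri tT unfolding triangle_on_def by auto
  then obtain a b c where abc: "t = {a,b,c}" "a \<noteq> b" "a \<noteq> c" "b \<noteq> c" by (meson card_3_iff)
  have k1: "priv T t {a,b} \<or> priv T t {b,c}" using keyK[OF tri nr tT abc(1)] abc by blast
  have k2: "priv T t {b,a} \<or> priv T t {a,c}" using keyK[of T V t b a c] tri nr tT abc by (auto simp: insert_commute)
  have k3: "priv T t {a,c} \<or> priv T t {c,b}" using keyK[of T V t a c b] tri nr tT abc by (auto simp: insert_commute)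
  have n1: "{a,b} \<noteq> {b,c}" "{a,b} \<noteq> {a,c}" "{a,c} \<noteq> {b,c}" using abc by (auto simp: doubleton_eq_iff)
  show ?thesis
  proof (cases "priv T t {a,b}")
    case True
    then show ?thesis using k2 k3 n1
      by (metis fst_conv snd_conv insert_commute)
  next
    case False
    then show ?thesis using k1 k2 k3 n1
      by (metis fst_conv snd_conv insert_commute)
  qed
qed

lemma tf_lemma:
  assumes tri: "\<forall>t\<in>T. triangle_on V t" and nr: "\<not> has_rainbow_triangle V T"
  and t1: "t1 \<in> T" and t2: "t2 \<in> T" and t3: "t3 \<in> T"
  and p1: "priv T t1 {x,y}" and p2: "priv T t2 {y,z}" and p3: "priv T t3 {x,z}"
  and h: "x\<noteq>y" "y\<noteq>z" "x\<noteq>z"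
  shows "t1 = t2 \<and> t2 = t3"
proof (rule ccontr)
  assume ne: "\<not> (t1 = t2 \<and> t2 = t3)"
  have s1: "{x,y} \<subseteq> t1" and s2: "{y,z} \<subseteq> t2" and s3: "{x,z} \<subseteq> t3"
    using p1 p2 p3 unfolding priv_def by auto
  have a1: "\<forall>t'\<in>T. {x,y} \<subseteq> t' \<longrightarrow> t' = t1" using p1 unfolding priv_def by blast
  have a2: "\<forall>t'\<in>T. {y,z} \<subseteq> t' \<longrightarrow> t' = t2" using p2 unfolding priv_def by blast
  have a3: "\<forall>t'\<in>T. {x,z} \<subseteq> t' \<longrightarrow> t' = t3" using p3 unfolding priv_def by blast
  have d: "t1 \<noteq> t2 \<and> t1 \<noteq> t3 \<and> t2 \<noteq> t3"
  proof (intro conjI notI)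
    assume "t1 = t2" then have "{x,z} \<subseteq> t1" using s1 s2 by auto
    then have "t1 = t3" using a3 t1 by blast
    then show False using ne \<open>t1 = t2\<close> by simp
  next
    assume "t1 = t3" then have "{y,z} \<subseteq> t1" using s1 s3 by auto
    then have "t1 = t2" using a2 t1 by blast
    then show False using ne \<open>t1 = t3\<close> by simp
  next
    assume "t2 = t3" then have "{x,y} \<subseteq> t2" using s2 s3 by auto
    then have "t1 = t2" using a1 t2 by blast
    then show False using ne \<open>t2 = t3\<close> by simp
  qed
  have "t1 \<subseteq> V" "t2 \<subseteq> V" using tri t1 t2 by (auto simp: triangle_on_def)
  then have "{x,y,z} \<subseteq> V" using s1 s2 by blast
  moreover have "card {x,y,z} = 3" using h by simp
  ultimately have tr: "triangle_on V {x,y,z}" by (simp add: triangle_on_def)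
  have "has_rainbow_triangle V T"
    unfolding has_rainbow_triangle_def
    by (rule exI[of _ x], rule exI[of _ y], rule exI[of _ z], rule exI[of _ t1], rule exI[of _ t2],
        rule exI[of _ t3]) (use tr d t1 t2 t3 s1 s2 s3 in simp)
  then show False using nr by simp
qed

theorem theorem2p1:
  fixes V :: "'a set" and T :: "'a set set" and n :: nat
  assumes "finite V" and "card V = n"
    and "\<forall>t\<in>T. triangle_on V t"
    and "\<not> has_rainbow_triangle V T"
  shows "real (card T) \<le> real n ^ 2 / 8"
proof -
  note tri = assms(3) and nr = assms(4)
  have "\<forall>t\<in>T. \<exists>p. fst p \<noteq> snd p \<and> priv T t (fst p) \<and> priv T t (snd p)"
    using two_priv[OF tri nr] by blast
  then obtain f where f: "\<And>t. t \<in> T \<Longrightarrow> fst (f t) \<noteq> snd (f t) \<and> priv T t (fst (f t)) \<and> priv T t (snd (f t))"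
    by metis
  have finT: "finite T"
  proof (rule finite_subset)
    show "T \<subseteq> Pow V" using tri unfolding triangle_on_def by auto
  qed (use assms(1) in simp)
  define H where "H = (\<Union>t\<in>T. {fst (f t), snd (f t)})"
  have privH: "\<exists>t\<in>T. priv T t e" if "e \<in> H" for e
    using that f unfolding H_def by blast
  have "card H = (\<Sum>t\<in>T. card {fst (f t), snd (f t)})"
    unfolding H_def
  proof (rule card_UN_disjoint[OF finT])
    show "\<forall>t\<in>T. finite {fst (f t), snd (f t)}" by simp
    show "\<forall>i\<in>T. \<forall>j\<in>T. i \<noteq> j \<longrightarrow> {fst (f i), snd (f i)} \<inter> {fst (f j), snd (f j)} = {}"
    proof (intro ballI impI)
      fix i j assume ij: "i \<in> T" "j \<in> T" "i \<noteq> j"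
      have np: "\<not> (priv T i e \<and> priv T j e)" for e using ij unfolding priv_def by blast
      show "{fst (f i), snd (f i)} \<inter> {fst (f j), snd (f j)} = {}"
      proof (rule ccontr)
        assume "{fst (f i), snd (f i)} \<inter> {fst (f j), snd (f j)} \<noteq> {}"
        then obtain e where e: "e \<in> {fst (f i), snd (f i)}" "e \<in> {fst (f j), snd (f j)}" by blast
        have "priv T i e" using e(1) f[OF ij(1)] by auto
        moreover have "priv T j e" using e(2) f[OF ij(2)] by auto
        ultimately show False using np by blast
      qed
    qed
  qed
  also have "\<dots> = (\<Sum>t\<in>T. 2)" using f by (intro sum.cong) auto
  finally have cH: "card H = 2 * card T" by simp
  have HV: "H \<subseteq> {e. e \<subseteq> V \<and> card e = 2}"
  proof
    fix e assume "e \<in> H"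
    then obtain t where "t \<in> T" "priv T t e" using privH by blast
    then show "e \<in> {e. e \<subseteq> V \<and> card e = 2}" using tri unfolding priv_def triangle_on_def by auto
  qed
  have tf: False if h: "{x,y}\<in>H" "{y,z}\<in>H" "{x,z}\<in>H" "x\<noteq>y" "y\<noteq>z" "x\<noteq>z" for x y z
  proof -
    obtain t1 where t1: "t1 \<in> T" "{x,y} \<in> {fst (f t1), snd (f t1)}" using h(1) unfolding H_def by blast
    obtain t2 where t2: "t2 \<in> T" "{y,z} \<in> {fst (f t2), snd (f t2)}" using h(2) unfolding H_def by blast
    obtain t3 where t3: "t3 \<in> T" "{x,z} \<in> {fst (f t3), snd (f t3)}" using h(3) unfolding H_def by blast
    have p1: "priv T t1 {x,y}" using t1 f by auto
    have p2: "priv T t2 {y,z}" using t2 f by auto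
    have p3: "priv T t3 {x,z}" using t3 f by auto
    have n1: "{x,y} \<noteq> {y,z}" "{x,y} \<noteq> {x,z}" "{x,z} \<noteq> {y,z}" using h by (auto simp: doubleton_eq_iff)
    have "t1 = t2 \<and> t2 = t3" by (rule tf_lemma[OF tri nr t1(1) t2(1) t3(1) p1 p2 p3 h(4-6)])
    then have "{x,y} \<in> {fst (f t1), snd (f t1)}" "{y,z} \<in> {fst (f t1), snd (f t1)}"
      "{x,z} \<in> {fst (f t1), snd (f t1)}" using t1 t2 t3 by auto
    then show False using n1 by blast
  qed
  have "4 * card H \<le> card V ^ 2"
    by (rule mantel[OF assms(1) HV]) (rule tf)
  then have "8 * card T \<le> n ^ 2" using cH assms(2) by simp
  then have "real (8 * card T) \<le> real (n ^ 2)" by linarith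
  then show ?thesis by simp
qed

end
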